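(* Let $n\ge 1$. For each $1\le j\le n$, let $N^{(j)}$ be the smallest $k\ge 1$ such that $w_j$ and $w_{k+j}$ belong to the same class. Then $$\hat H_3=\frac1n\sum_{j=1}^n h_{N^{(j)}-1}$$ is an unbiased estimator of the Shannon entropy, i.e. $E(\hat H_3)=-\sum_{i=1}^M p_i\log(p_i)$.
   Context: Let $w_1,w_2,\dots$ be an infinite sequence of independent, identically distributed samples. Each sample belongs to exactly one of $M$ classes $C_1,\dots,C_M$, and $\Pr(w_k\in C_i)=p_i$, where $0<p_i\le 1$ and $\sum_{i=1}^M p_i=1$. The logarithm is the natural logarithm. The harmonic numbers are $h_n=\sum_{k=1}^n 1/k$ for $n\ge 1$, with $h_0=0$. *)

theory Defs
  imports "HOL-Probability.Probability"
begin

definition first_return :: "(nat \<Rightarrow> 'w \<Rightarrow> 'c) \<Rightarrow> nat \<Rightarrow> 'w \<Rightarrow> nat" where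
  "first_return X j \<omega> = (LEAST k. k \<ge> 1 \<and> X (k + j) \<omega> = X j \<omega>)"

end

theory Submission
  imports Defs
begin

lemma lnser:
  fixes p :: real assumes "0 < p" "p \<le> 1"
  shows "summable (\<lambda>k. (1 - p) ^ Suc k / real (k + 1))"
    and "(\<Sum>k. (1 - p) ^ Suc k / real (k + 1)) = - ln p"
proof -
  have g: "summable (\<lambda>n. (1 - p) * (1 - p) ^ n)"
    using assms by (intro summable_mult summable_geometric) auto
  show s: "summable (\<lambda>k. (1 - p) ^ Suc k / real (k + 1))"
  proof (rule summable_comparison_test'[OF g])
    fix n :: nat
    have "0 \<le> (1 - p) ^ Suc n" using assms by simp
    then have "(1 - p) ^ Suc n / real (n + 1) \<le> (1 - p) ^ Suc n / 1"
      by (intro divide_left_mono) auto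
    then show "norm ((1 - p) ^ Suc n / real (n + 1)) \<le> (1 - p) * (1 - p) ^ n"
      using \<open>0 \<le> (1 - p) ^ Suc n\<close> by simp
  qed
  have t: "(-1)^n * (1 / real (n + 1)) * (p - 1)^(Suc n) = - ((1 - p) ^ Suc n / real (n + 1))" for n
  proof -
    have "(p - 1)^(Suc n) = (-1)^Suc n * (1 - p)^Suc n"
      by (metis minus_diff_eq power_minus)
    moreover have "(-1::real)^n * (-1)^Suc n = -1"
      by (cases "even n") (simp_all add: neg_one_even_power neg_one_odd_power)
    moreover have "\<And>s t a d :: real. s * (1 / d) * (t * a) = (s * t) * (a / d)"
      by (simp add: divide_inverse ac_simps)
    ultimately show ?thesis by simp
  qed
  have "ln p = (\<Sum>n. (-1)^n * (1 / real (n + 1)) * (p - 1)^(Suc n))"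
    using assms by (intro ln_series) auto
  also have "\<dots> = (\<Sum>n. - ((1 - p) ^ Suc n / real (n + 1)))" by (simp only: t)
  also have "\<dots> = - (\<Sum>n. (1 - p) ^ Suc n / real (n + 1))" by (rule suminf_minus[OF s])
  finally show "(\<Sum>k. (1 - p) ^ Suc k / real (k + 1)) = - ln p" by simp
qed

lemma harm_ser: "ennreal (harm m) = (\<Sum>k. ennreal (if k < m then 1 / real (k + 1) else 0))"
proof -
  let ?f = "\<lambda>k. if k < m then 1 / real (k + 1) else 0"
  have "harm m = (\<Sum>k<m. 1 / real (k + 1))" by (simp add: harm_altdef field_simps)
  also have "\<dots> = (\<Sum>k. ?f k)"
    by (subst suminf_finite[of "{..<m}"]) auto
  finally have "ennreal (harm m) = ennreal (\<Sum>k. ?f k)" by simp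
  also have "\<dots> = (\<Sum>k. ennreal (?f k))"
    by (rule suminf_ennreal2[symmetric]) (auto intro: summable_finite[of "{..<m}"])
  finally show ?thesis .
qed

locale ent = prob_space P for P :: "'w measure" +
  fixes X :: "nat \<Rightarrow> 'w \<Rightarrow> nat" and p :: "nat \<Rightarrow> real" and M :: nat
  assumes indep: "indep_vars (\<lambda>_. count_space UNIV) X {1..}"
  and dist: "\<And>k i. k \<ge> 1 \<Longrightarrow> i \<in> {1..M} \<Longrightarrow> measure P {\<omega> \<in> space P. X k \<omega> = i} = p i"
  and ppos: "\<And>i. i \<in> {1..M} \<Longrightarrow> 0 < p i \<and> p i \<le> 1"
  and psum: "(\<Sum>i=1..M. p i) = 1"
begin

lemma pq: "i \<in> {1..M} \<Longrightarrow> 0 \<le> p i \<and> 0 \<le> 1 - p i \<and> p i * ln (p i) \<le> 0"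
  using ppos[of i] by (auto intro!: mult_nonneg_nonpos)

lemma Xmeas: "k \<ge> 1 \<Longrightarrow> X k \<in> measurable P (count_space UNIV)"
  using indep unfolding indep_vars_def2 by auto

lemma Xsets: "k \<ge> 1 \<Longrightarrow> {\<omega> \<in> space P. X k \<omega> \<in> A} \<in> events"
  using measurable_sets[OF Xmeas, of k "A"] by (simp add: vimage_def Int_def conj_commute)

lemma Xsets1: "k \<ge> 1 \<Longrightarrow> {\<omega> \<in> space P. X k \<omega> = i} \<in> events"
  using Xsets[of k "{i}"] by simp

lemma eq_sets: assumes "a \<ge> 1" "b \<ge> 1" shows "{\<omega> \<in> space P. X a \<omega> = X b \<omega>} \<in> events"
proof -
  have "{\<omega> \<in> space P. X a \<omega> = X b \<omega>} = (\<Union>v. {\<omega> \<in> space P. X a \<omega> = v} \<inter> {\<omega> \<in> space P. X b \<omega> = v})"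
    by auto
  also have "\<dots> \<in> events" using Xsets1 assms by (intro sets.countable_UN) auto
  finally show ?thesis .
qed

lemma Xrange: assumes "j \<ge> 1" shows "prob {\<omega> \<in> space P. X j \<omega> \<in> {1..M}} = 1"
proof -
  have "{\<omega> \<in> space P. X j \<omega> \<in> {1..M}} = (\<Union>i\<in>{1..M}. {\<omega> \<in> space P. X j \<omega> = i})" by auto
  also have "prob \<dots> = (\<Sum>i\<in>{1..M}. prob {\<omega> \<in> space P. X j \<omega> = i})"
    using Xsets1 assms by (intro finite_measure_finite_Union) (auto simp: disjoint_family_on_def)
  also have "\<dots> = (\<Sum>i\<in>{1..M}. p i)" using dist assms by (intro sum.cong) auto
  finally show ?thesis using psum by simp
qed

lemma XrangeAE: assumes "j \<ge> 1" shows "AE \<omega> in P. X j \<omega> \<in> {1..M}"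
  using AE_prob_1[OF Xrange[OF assms]] by auto

definition E :: "nat \<Rightarrow> nat \<Rightarrow> nat \<Rightarrow> 'w set" where
  "E j i K = {\<omega> \<in> space P. X j \<omega> = i \<and> (\<forall>l\<in>{1..K}. X (l + j) \<omega> \<noteq> i)}"

lemma E_prob: assumes j: "j \<ge> 1" and i: "i \<in> {1..M}"
  shows "prob (E j i K) = p i * (1 - p i) ^ K"
proof -
  define A where "A m = X m -` (if m = j then {i} else - {i}) \<inter> space P" for m
  have EA: "E j i K = (\<Inter>m\<in>{j..j+K}. A m)"
  proof -
    have sh: "(\<forall>l\<in>{1..K}. Q (l + j)) \<longleftrightarrow> (\<forall>m\<in>{Suc j..j+K}. Q m)" for Q :: "nat \<Rightarrow> bool"
    proof
      assume H: "\<forall>l\<in>{1..K}. Q (l + j)"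
      show "\<forall>m\<in>{Suc j..j+K}. Q m"
      proof
        fix m assume "m \<in> {Suc j..j+K}"
        then have "m - j \<in> {1..K}" "m - j + j = m" by auto
        then show "Q m" using H by metis
      qed
    qed auto
    have "E j i K = {\<omega> \<in> space P. X j \<omega> = i \<and> (\<forall>m\<in>{Suc j..j+K}. X m \<omega> \<noteq> i)}"
      unfolding E_def using sh[of "\<lambda>m. X m _ \<noteq> i"] by auto
    also have "\<dots> = (\<Inter>m\<in>{j..j+K}. A m)"
      unfolding A_def by (auto split: if_splits simp: Suc_le_eq)
    finally show ?thesis .
  qed
  have "prob (\<Inter>m\<in>{j..j+K}. A m) = (\<Prod>m\<in>{j..j+K}. prob (A m))"
    apply (rule indep_setsD[OF indep[unfolded indep_vars_def2, THEN conjunct2]])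
    using j by (auto simp: A_def)
  also have "\<dots> = prob (A j) * (\<Prod>m\<in>{Suc j..j+K}. prob (A m))"
    by (simp add: prod.atLeast_Suc_atMost)
  also have "prob (A j) = p i"
    using dist[OF j i] unfolding A_def by (simp add: vimage_def Int_def conj_commute)
  also have "(\<Prod>m\<in>{Suc j..j+K}. prob (A m)) = (\<Prod>m\<in>{Suc j..j+K}. 1 - p i)"
  proof (intro prod.cong refl)
    fix m assume m: "m \<in> {Suc j..j+K}"
    then have m1: "m \<ge> 1" "m \<noteq> j" using j by auto
    have "A m = space P - {\<omega> \<in> space P. X m \<omega> = i}" using m1 unfolding A_def by auto
    then show "prob (A m) = 1 - p i" using prob_compl[OF Xsets1[OF m1(1)]] dist[OF m1(1) i] by simp
  qed
  also have "\<dots> = (1 - p i) ^ K" by simp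
  finally show ?thesis using EA by simp
qed

definition B :: "nat \<Rightarrow> nat \<Rightarrow> 'w set" where
  "B j K = {\<omega> \<in> space P. \<forall>l\<in>{1..K}. X (l + j) \<omega> \<noteq> X j \<omega>}"

definition Z :: "nat \<Rightarrow> 'w set" where
  "Z j = {\<omega> \<in> space P. \<forall>l\<in>{1..}. X (l + j) \<omega> \<noteq> X j \<omega>}"

definition H :: real where "H = (\<Sum>i=1..M. p i * (- ln (p i)))"

context fixes j :: nat assumes j: "j \<ge> 1"
begin

lemma B_sets: "B j K \<in> events"
proof -
  have "B j K = space P - (\<Union>l\<in>{1..K}. {\<omega> \<in> space P. X (l + j) \<omega> = X j \<omega>})"
    unfolding B_def by auto
  also have "\<dots> \<in> events" using eq_sets j by (intro sets.Diff sets.finite_UN) auto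
  finally show ?thesis .
qed

lemma Z_sets: "Z j \<in> events"
proof -
  have "Z j = space P - (\<Union>l\<in>{1..}. {\<omega> \<in> space P. X (l + j) \<omega> = X j \<omega>})"
    unfolding Z_def by auto
  also have "\<dots> \<in> events" using eq_sets j by (intro sets.Diff sets.countable_UN') auto
  finally show ?thesis .
qed

lemma E_sets: "E j i K \<in> events"
proof -
  have "E j i K = B j K \<inter> {\<omega> \<in> space P. X j \<omega> = i}"
    unfolding E_def B_def by auto
  then show ?thesis using B_sets Xsets1[OF j] by auto
qed

lemma B_prob: "prob (B j K) = (\<Sum>i=1..M. p i * (1 - p i) ^ K)"
proof -
  have "AE \<omega> in P. \<omega> \<in> B j K \<longleftrightarrow> \<omega> \<in> (\<Union>i\<in>{1..M}. E j i K)"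
    using XrangeAE[OF j] by eventually_elim (auto simp: B_def E_def)
  then have "prob (B j K) = prob (\<Union>i\<in>{1..M}. E j i K)"
    using B_sets E_sets by (intro measure_eq_AE) auto
  also have "\<dots> = (\<Sum>i\<in>{1..M}. prob (E j i K))"
    using E_sets by (intro finite_measure_finite_Union) (auto simp: disjoint_family_on_def E_def)
  also have "\<dots> = (\<Sum>i=1..M. p i * (1 - p i) ^ K)"
    using E_prob[OF j] by (intro sum.cong) auto
  finally show ?thesis .
qed

lemma Z_null: "Z j \<in> null_sets P"
proof -
  have lim: "(\<lambda>K. \<Sum>i=1..M. p i * (1 - p i) ^ K) \<longlonglongrightarrow> (\<Sum>i=1..M. 0)"
  proof (intro tendsto_sum)
    fix i assume i: "i \<in> {1..M}"
    have "norm (1 - p i) < 1" using ppos[OF i] by auto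
    then have "(\<lambda>K. (1 - p i) ^ K) \<longlonglongrightarrow> 0" by (rule LIMSEQ_power_zero)
    then show "(\<lambda>K. p i * (1 - p i) ^ K) \<longlonglongrightarrow> 0" by (rule tendsto_mult_right_zero)
  qed
  have "\<forall>K. prob (Z j) \<le> (\<Sum>i=1..M. p i * (1 - p i) ^ K)"
  proof
    fix K
    have "Z j \<subseteq> B j K" unfolding Z_def B_def by auto
    then have "prob (Z j) \<le> prob (B j K)" using B_sets by (intro finite_measure_mono) auto
    then show "prob (Z j) \<le> (\<Sum>i=1..M. p i * (1 - p i) ^ K)" using B_prob by simp
  qed
  moreover have lim0: "(\<lambda>K. \<Sum>i=1..M. p i * (1 - p i) ^ K) \<longlonglongrightarrow> 0" using lim by simp
  ultimately have "prob (Z j) \<le> 0"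
    by (intro tendsto_le[OF trivial_limit_sequentially lim0 tendsto_const]) auto
  then have "prob (Z j) = 0" using measure_nonneg[of P "Z j"] by linarith
  then show ?thesis using Z_sets by (intro null_setsI) (simp add: emeasure_eq_measure)
qed

lemma fr_B: assumes "\<omega> \<in> space P - Z j" shows "K < first_return X j \<omega> \<longleftrightarrow> \<omega> \<in> B j K"
proof -
  let ?Q = "\<lambda>k. k \<ge> 1 \<and> X (k + j) \<omega> = X j \<omega>"
  have ex: "\<exists>k. ?Q k" using assms unfolding Z_def by auto
  have fr: "first_return X j \<omega> = (LEAST k. ?Q k)" unfolding first_return_def ..
  show ?thesis
  proof
    assume "K < first_return X j \<omega>"
    then have "\<forall>l\<in>{1..K}. \<not> ?Q l"
    proof (intro ballI)
      fix l assume "K < first_return X j \<omega>" "l \<in> {1..K}"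
      then have "l < (LEAST k. ?Q k)" using fr by auto
      then show "\<not> ?Q l" by (rule not_less_Least)
    qed
    then show "\<omega> \<in> B j K" using assms unfolding B_def by auto
  next
    assume b: "\<omega> \<in> B j K"
    have q: "?Q (first_return X j \<omega>)" unfolding fr by (rule LeastI_ex[OF ex])
    show "K < first_return X j \<omega>"
    proof (rule ccontr)
      assume "\<not> K < first_return X j \<omega>"
      then have "first_return X j \<omega> \<in> {1..K}" using q by auto
      then show False using b q unfolding B_def by auto
    qed
  qed
qed

lemma N_meas: "first_return X j \<in> measurable P (count_space UNIV)"
  unfolding first_return_def
proof (rule measurable_Least)
  fix k
  show "(\<lambda>x. 1 \<le> k \<and> X (k + j) x = X j x) \<in> measurable P (count_space UNIV)"
  proof (cases "k \<ge> 1")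
    case True
    then show ?thesis using eq_sets[of "k + j" j] j unfolding pred_def[symmetric] by (simp add: pred_def)
  next
    case False
    then show ?thesis by simp
  qed
qed

lemma harm_meas: "(\<lambda>\<omega>. harm (first_return X j \<omega> - 1) :: real) \<in> borel_measurable P"
  using measurable_compose[OF N_meas, of "\<lambda>n. harm (n - 1) :: real" borel]
  by (simp add: measurable_count_space)

definition C :: "nat \<Rightarrow> 'w set" where
  "C k = {\<omega> \<in> space P. Suc k < first_return X j \<omega>}"

lemma C_sets: "C k \<in> events"
  using measurable_sets[OF N_meas, of "{Suc k<..}"] unfolding C_def
  by (simp add: vimage_def Int_def conj_commute)

lemma C_emeasure: "emeasure P (C k) = ennreal (\<Sum>i=1..M. p i * (1 - p i) ^ Suc k)"
proof -
  have "AE \<omega> in P. \<omega> \<notin> Z j" by (rule AE_not_in[OF Z_null])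
  then have "AE \<omega> in P. \<omega> \<in> C k \<longleftrightarrow> \<omega> \<in> B j (Suc k)"
    by eventually_elim (use fr_B in \<open>auto simp: C_def B_def\<close>)
  then have "emeasure P (C k) = emeasure P (B j (Suc k))"
    using C_sets B_sets by (intro emeasure_eq_AE) auto
  also have "\<dots> = ennreal (\<Sum>i=1..M. p i * (1 - p i) ^ Suc k)"
    by (simp add: emeasure_eq_measure B_prob)
  finally show ?thesis .
qed

lemma harm_expand: assumes "\<omega> \<in> space P"
  shows "ennreal (harm (first_return X j \<omega> - 1)) =
     (\<Sum>k. ennreal (1 / real (k + 1)) * indicator (C k) \<omega>)"
proof -
  let ?m = "first_return X j \<omega> - 1"
  have "ennreal (harm ?m) = (\<Sum>k. ennreal (if k < ?m then 1 / real (k + 1) else 0))"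
    by (rule harm_ser)
  also have "\<dots> = (\<Sum>k. ennreal (1 / real (k + 1)) * indicator (C k) \<omega>)"
  proof (rule suminf_cong)
    fix k
    show "ennreal (if k < ?m then 1 / real (k + 1) else 0) = ennreal (1 / real (k + 1)) * indicator (C k) \<omega>"
    proof (cases "k < ?m")
      case True
      then have "\<omega> \<in> C k" using assms unfolding C_def by auto
      then show ?thesis using True by simp
    next
      case False
      then have "\<omega> \<notin> C k" unfolding C_def by auto
      then show ?thesis using False by simp
    qed
  qed
  finally show ?thesis .
qed


lemma nn_harm: "(\<integral>\<^sup>+ \<omega>. ennreal (harm (first_return X j \<omega> - 1)) \<partial>P) = ennreal H"
proof -
  have "(\<integral>\<^sup>+ \<omega>. ennreal (harm (first_return X j \<omega> - 1)) \<partial>P) =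
        (\<integral>\<^sup>+ \<omega>. (\<Sum>k. ennreal (1 / real (k + 1)) * indicator (C k) \<omega>) \<partial>P)"
    by (intro nn_integral_cong harm_expand)
  also have "\<dots> = (\<Sum>k. \<integral>\<^sup>+ \<omega>. ennreal (1 / real (k + 1)) * indicator (C k) \<omega> \<partial>P)"
  proof (rule nn_integral_suminf)
    fix k
    have [measurable]: "C k \<in> sets P" by (rule C_sets)
    show "(\<lambda>\<omega>. ennreal (1 / real (k + 1)) * indicator (C k) \<omega>) \<in> borel_measurable P"
      by measurable
  qed
  also have "\<dots> = (\<Sum>k. ennreal (1 / real (k + 1)) * emeasure P (C k))"
    by (intro suminf_cong nn_integral_cmult_indicator C_sets)
  also have "\<dots> = (\<Sum>k. ennreal (\<Sum>i=1..M. p i * ((1 - p i) ^ Suc k / real (k + 1))))"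
  proof (intro suminf_cong)
    fix k
    have "0 \<le> (\<Sum>i=1..M. p i * (1 - p i) ^ Suc k)" using pq by (intro sum_nonneg) auto
    then have "ennreal (1 / real (k + 1)) * ennreal (\<Sum>i=1..M. p i * (1 - p i) ^ Suc k) =
          ennreal (1 / real (k + 1) * (\<Sum>i=1..M. p i * (1 - p i) ^ Suc k))"
      by (intro ennreal_mult[symmetric]) auto
    then have "ennreal (1 / real (k + 1)) * emeasure P (C k) =
          ennreal (1 / real (k + 1) * (\<Sum>i=1..M. p i * (1 - p i) ^ Suc k))"
      by (simp only: C_emeasure)
    also have "1 / real (k + 1) * (\<Sum>i=1..M. p i * (1 - p i) ^ Suc k) =
               (\<Sum>i=1..M. p i * ((1 - p i) ^ Suc k / real (k + 1)))"
      by (simp add: sum_distrib_left field_simps)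
    finally show "ennreal (1 / real (k + 1)) * emeasure P (C k) =
          ennreal (\<Sum>i=1..M. p i * ((1 - p i) ^ Suc k / real (k + 1)))" .
  qed
  also have "\<dots> = ennreal (\<Sum>k. \<Sum>i=1..M. p i * ((1 - p i) ^ Suc k / real (k + 1)))"
  proof (rule suminf_ennreal2)
    fix k show "0 \<le> (\<Sum>i=1..M. p i * ((1 - p i) ^ Suc k / real (k + 1)))"
      using pq by (intro sum_nonneg) auto
  next
    show "summable (\<lambda>k. \<Sum>i=1..M. p i * ((1 - p i) ^ Suc k / real (k + 1)))"
    proof (intro summable_sum summable_mult)
      fix i assume "i \<in> {1..M}"
      then show "summable (\<lambda>k. (1 - p i) ^ Suc k / real (k + 1))" using ppos by (intro lnser(1)) auto
    qed
  qed
  also have "(\<Sum>k. \<Sum>i=1..M. p i * ((1 - p i) ^ Suc k / real (k + 1))) =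
             (\<Sum>i=1..M. \<Sum>k. p i * ((1 - p i) ^ Suc k / real (k + 1)))"
  proof (intro suminf_sum summable_mult)
    fix i assume "i \<in> {1..M}"
    then show "summable (\<lambda>k. (1 - p i) ^ Suc k / real (k + 1))" using ppos by (intro lnser(1)) auto
  qed
  also have "\<dots> = H" unfolding H_def
  proof (intro sum.cong refl)
    fix i assume i: "i \<in> {1..M}"
    show "(\<Sum>k. p i * ((1 - p i) ^ Suc k / real (k + 1))) = p i * - ln (p i)"
    proof -
      have "(\<Sum>k. p i * ((1 - p i) ^ Suc k / real (k + 1))) = p i * (\<Sum>k. (1 - p i) ^ Suc k / real (k + 1))"
        by (rule suminf_mult[OF lnser(1)]) (use ppos[OF i] in auto)
      then show ?thesis using lnser(2)[of "p i"] ppos[OF i] by simp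
    qed
  qed
  finally show ?thesis .
qed

lemma H_nonneg: "0 \<le> H"
  unfolding H_def using pq by (intro sum_nonneg) auto

lemma single_integrable: "integrable P (\<lambda>\<omega>. harm (first_return X j \<omega> - 1) :: real)"
proof (rule integrableI_nonneg[OF harm_meas])
  show "AE x in P. 0 \<le> (harm (first_return X j x - 1) :: real)" by (intro AE_I2) (rule harm_nonneg)
  show "(\<integral>\<^sup>+ x. ennreal (harm (first_return X j x - 1)) \<partial>P) < \<infinity>"
    unfolding nn_harm infinity_ennreal_def by (rule ennreal_less_top)
qed

lemma single_integral: "(\<integral>\<omega>. harm (first_return X j \<omega> - 1) \<partial>P) = H"
proof -
  have "(\<integral>\<omega>. harm (first_return X j \<omega> - 1) \<partial>P) =
     enn2real (\<integral>\<^sup>+ x. ennreal (harm (first_return X j x - 1)) \<partial>P)"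
    by (rule integral_eq_nn_integral[OF harm_meas], intro AE_I2, rule harm_nonneg)
  also have "\<dots> = H" unfolding nn_harm using H_nonneg by (rule enn2real_ennreal)
  finally show ?thesis .
qed

end

end
theorem mainTheorem3:
  fixes P :: "'w measure" and X :: "nat \<Rightarrow> 'w \<Rightarrow> nat"
    and p :: "nat \<Rightarrow> real" and M n :: nat
  assumes "prob_space P"
    and "prob_space.indep_vars P (\<lambda>_. count_space UNIV) X {1..}"
    and "\<And>k i. k \<ge> 1 \<Longrightarrow> i \<in> {1..M} \<Longrightarrow>
           measure P {\<omega> \<in> space P. X k \<omega> = i} = p i"
    and "\<And>i. i \<in> {1..M} \<Longrightarrow> 0 < p i \<and> p i \<le> 1"
    and "(\<Sum>i=1..M. p i) = 1"
    and "n \<ge> 1"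
  shows "(\<integral>\<omega>. (1 / real n) * (\<Sum>j=1..n. harm (first_return X j \<omega> - 1)) \<partial>P)
         = - (\<Sum>i=1..M. p i * ln (p i))"
proof -
  interpret ent P X p M
    using assms(1-5) unfolding ent_def ent_axioms_def by blast
  have int: "\<And>j. j \<in> {1..n} \<Longrightarrow> integrable P (\<lambda>\<omega>. harm (first_return X j \<omega> - 1) :: real)"
    by (intro single_integrable) auto
  have "(\<integral>\<omega>. (1 / real n) * (\<Sum>j=1..n. harm (first_return X j \<omega> - 1)) \<partial>P)
      = (1 / real n) * (\<integral>\<omega>. (\<Sum>j=1..n. harm (first_return X j \<omega> - 1)) \<partial>P)"
    by (rule integral_mult_right_zero)
  also have "(\<integral>\<omega>. (\<Sum>j=1..n. harm (first_return X j \<omega> - 1) :: real) \<partial>P)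
      = (\<Sum>j=1..n. (\<integral>\<omega>. harm (first_return X j \<omega> - 1) \<partial>P))"
    using int by (subst Bochner_Integration.integral_sum) auto
  also have "\<dots> = (\<Sum>j=1..n. H)"
    by (intro sum.cong refl single_integral) auto
  also have "\<dots> = real n * H" by simp
  finally have "(\<integral>\<omega>. (1 / real n) * (\<Sum>j=1..n. harm (first_return X j \<omega> - 1)) \<partial>P) = H"
    using assms(6) by simp
  moreover have "H = - (\<Sum>i=1..M. p i * ln (p i))" unfolding H_def by (simp add: sum_negf)
  ultimately show ?thesis by simp
qed

end
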